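(* For every $N\in\mathbb{N}$, setting $n=2^N$, and every $\epsilon>0$, there exists a qubit state $\rho$ (depending on $n$ and $\epsilon$) such that $$M^{(1)}(\rho)<\frac1n\quad\text{and}\quad \frac{M^{(1)}(\sigma_{(m)})}{M^{(1)}(\rho)}>2^{-\epsilon}\sqrt{n}\quad\text{for all } m\ge\log_2 n,$$ where $\sigma_{(m)}$ is the output of the $m$th step of the concatenation protocol applied to $\rho$.
   Context: Qubit basis $\{|0\rangle,|1\rangle\}$ is the eigenbasis of $L=|1\rangle\langle1|$; $M^{(1)}(\sigma):=|\langle0|\sigma|1\rangle|$ (the trace norm of the first mode $|1\rangle\langle1|\sigma|0\rangle\langle0|$). Concatenation protocol: $\sigma_{(0)}=\rho$ and $\sigma_{(m+1)}=\mathrm{tr}_B\big[U_m(\sigma_{(m)}\otimes\sigma_{(m)})U_m^\dagger\big]$, where, with $p^{(m)}_{00}=\langle0|\sigma_{(m)}|0\rangle$, $U_m$ acts as the identity on $|00\rangle,|11\rangle$ and on $\mathrm{span}\{|01\rangle,|10\rangle\}$ as $|01\rangle\mapsto\cos\theta_m|01\rangle+\sin\theta_m|10\rangle$, $|10\rangle\mapsto-\sin\theta_m|01\rangle+\cos\theta_m|10\rangle$ with $\cos\theta_m=1/\sqrt{1+(2p^{(m)}_{00}-1)^2}$, $\sin\theta_m=(2p^{(m)}_{00}-1)/\sqrt{1+(2p^{(m)}_{00}-1)^2}$. Step $m$ consumes $2^m$ copies of $\rho$. *)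

theory Defs
  imports Complex_Main
begin

text \<open>Qubit basis: False = |0>, True = |1>. A qubit operator is given by its matrix
  entries X i j = <i|X|j>; two-qubit operators are indexed by pairs (a,b) = |ab>
  (first component = system A, second = system B).\<close>

type_synonym qop = "bool \<Rightarrow> bool \<Rightarrow> complex"
type_synonym qop2 = "(bool \<times> bool) \<Rightarrow> (bool \<times> bool) \<Rightarrow> complex"

definition is_qubit_state :: "qop \<Rightarrow> bool" where
  "is_qubit_state \<rho> \<longleftrightarrow>
     (\<forall>i j. \<rho> i j = cnj (\<rho> j i)) \<and>
     (\<forall>v :: bool \<Rightarrow> complex. 0 \<le> Re (\<Sum>i\<in>UNIV. \<Sum>j\<in>UNIV. cnj (v i) * \<rho> i j * v j)) \<and>
     \<rho> False False + \<rho> True True = 1"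

definition tensor :: "qop \<Rightarrow> qop \<Rightarrow> qop2" where
  "tensor X Y = (\<lambda>(a,b) (c,d). X a c * Y b d)"

definition mmult2 :: "qop2 \<Rightarrow> qop2 \<Rightarrow> qop2" where
  "mmult2 X Y = (\<lambda>i j. \<Sum>k\<in>UNIV. X i k * Y k j)"

definition adj2 :: "qop2 \<Rightarrow> qop2" where
  "adj2 X = (\<lambda>i j. cnj (X j i))"

definition ptrace_B :: "qop2 \<Rightarrow> qop" where
  "ptrace_B X = (\<lambda>a c. \<Sum>b\<in>UNIV. X (a,b) (c,b))"

definition rotU :: "real \<Rightarrow> real \<Rightarrow> qop2" where
  "rotU c s = (\<lambda>i j.
     if i = (False,False) \<and> j = (False,False) then 1
     else if i = (True,True) \<and> j = (True,True) then 1
     else if i = (False,True) \<and> j = (False,True) then complex_of_real c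
     else if i = (True,False) \<and> j = (False,True) then complex_of_real s
     else if i = (False,True) \<and> j = (True,False) then complex_of_real (- s)
     else if i = (True,False) \<and> j = (True,False) then complex_of_real c
     else 0)"

definition concat_step :: "qop \<Rightarrow> qop" where
  "concat_step \<sigma> =
     (let p = Re (\<sigma> False False);
          c = 1 / sqrt (1 + (2*p - 1)^2);
          s = (2*p - 1) / sqrt (1 + (2*p - 1)^2);
          U = rotU c s
      in ptrace_B (mmult2 (mmult2 U (tensor \<sigma> \<sigma>)) (adj2 U)))"

primrec concat_sigma :: "qop \<Rightarrow> nat \<Rightarrow> qop" where
  "concat_sigma \<rho> 0 = \<rho>"
| "concat_sigma \<rho> (Suc m) = concat_step (concat_sigma \<rho> m)"

definition M1 :: "qop \<Rightarrow> real" where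
  "M1 \<sigma> = cmod (\<sigma> False True)"

end

theory Submission
  imports Defs
begin

definition mk :: "real \<Rightarrow> real \<Rightarrow> qop" where
  "mk p x = (\<lambda>i j. if i = j then (if i then complex_of_real (1-p) else complex_of_real p)
                   else complex_of_real x)"

definition stepPX :: "real \<times> real \<Rightarrow> real \<times> real" where
  "stepPX = (\<lambda>(p,x). (p - 2*(2*p-1)*x^2/(sqrt (1+(2*p-1)^2) * sqrt (1+(2*p-1)^2)), x * sqrt (1+(2*p-1)^2)))"

lemma UNIV_pair_bool: "(UNIV :: (bool \<times> bool) set) = {(False,False),(False,True),(True,False),(True,True)}"
  by auto

lemma step_mk: "concat_step (mk p x) = mk (fst (stepPX (p,x))) (snd (stepPX (p,x)))"
proof -
  define C where "C = complex_of_real (sqrt (1+(2*p-1)^2))"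
  have Spos: "sqrt (1+(2*p-1)^2) > 0" by (simp add: add_pos_nonneg)
  have C0: "C \<noteq> 0" unfolding C_def using Spos by simp
  have C2: "C*C = 1 + (2*complex_of_real p - 1)^2"
  proof -
    have "C*C = complex_of_real ((sqrt (1+(2*p-1)^2))^2)" unfolding C_def by (simp only: power2_eq_square of_real_mult)
    also have "\<dots> = complex_of_real (1+(2*p-1)^2)" by simp
    finally show ?thesis by simp
  qed
  have cC: "cnj C = C" unfolding C_def by simp
  have D0: "1 + (2*complex_of_real p - 1)^2 \<noteq> 0" using C0 C2 by (metis mult_eq_0_iff)
  have D1: "1 + (complex_of_real p * 2 - 1)^2 \<noteq> 0" using D0 by (simp add: mult.commute)
  show ?thesis
    unfolding concat_step_def Let_def stepPX_def
    apply (simp add: C_def[symmetric])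
    apply (rule ext)+
    apply (simp add: ptrace_B_def mmult2_def adj2_def tensor_def rotU_def mk_def UNIV_pair_bool UNIV_bool C_def[symmetric])
    apply (auto simp add: cC C0 D0 D1 field_simps)
    apply (insert C2; algebra)+
    done
qed


lemma stepPX_fst: "fst (stepPX (p,x)) = p - 2*(2*p-1)*x^2/(1+(2*p-1)^2)"
  unfolding stepPX_def by (simp add: add_nonneg_nonneg)

lemma stepPX_snd: "snd (stepPX (p,x)) = x * sqrt (1+(2*p-1)^2)"
  unfolding stepPX_def by simp

lemma concat_mk: "concat_sigma (mk p x) k = mk (fst ((stepPX^^k) (p,x))) (snd ((stepPX^^k) (p,x)))"
proof (induction k)
  case 0
  then show ?case by simp
next
  case (Suc k)
  have "concat_sigma (mk p x) (Suc k) = concat_step (concat_sigma (mk p x) k)" by simp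
  also have "\<dots> = concat_step (mk (fst ((stepPX^^k) (p,x))) (snd ((stepPX^^k) (p,x))))"
    using Suc by simp
  also have "\<dots> = mk (fst ((stepPX^^(Suc k)) (p,x))) (snd ((stepPX^^(Suc k)) (p,x)))"
    by (simp add: step_mk)
  finally show ?case .
qed

lemma M1_mk: "M1 (mk p x) = \<bar>x\<bar>"
  unfolding M1_def mk_def by simp

lemma x_nonneg: "0 \<le> x0 \<Longrightarrow> 0 \<le> snd ((stepPX^^k) (p0,x0))"
proof (induction k)
  case 0 then show ?case by simp
next
  case (Suc k)
  obtain p x where e: "(stepPX^^k) (p0,x0) = (p,x)" by (cases "(stepPX^^k) (p0,x0)")
  show ?case using Suc e by (simp add: stepPX_snd)
qed

lemma x_step_mono: "0 \<le> x0 \<Longrightarrow> snd ((stepPX^^k) (p0,x0)) \<le> snd ((stepPX^^(Suc k)) (p0,x0))"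
proof -
  assume h: "0 \<le> x0"
  obtain p x where e: "(stepPX^^k) (p0,x0) = (p,x)" by (cases "(stepPX^^k) (p0,x0)")
  have x0: "0 \<le> x" using x_nonneg[OF h, of k p0] e by simp
  have "1 \<le> sqrt (1+(2*p-1)^2)" by simp
  then have "x * 1 \<le> x * sqrt (1+(2*p-1)^2)" using x0 by (rule mult_left_mono)
  then show ?thesis using e by (simp add: stepPX_snd)
qed

lemma x_mono: "0 \<le> x0 \<Longrightarrow> N \<le> m \<Longrightarrow> snd ((stepPX^^N) (p0,x0)) \<le> snd ((stepPX^^m) (p0,x0))"
proof -
  assume h: "0 \<le> x0" "N \<le> m"
  have "\<And>k. snd ((stepPX^^k) (p0,x0)) \<le> snd ((stepPX^^(Suc k)) (p0,x0))"
    using x_step_mono[OF h(1)] by blast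
  then show ?thesis using lift_Suc_mono_le[of "\<lambda>k. snd ((stepPX^^k) (p0,x0))"] h(2) by blast
qed

lemma quad_nonneg:
  fixes p q t u w :: real
  assumes "0 \<le> p" "0 \<le> q" "t^2 \<le> p*q"
  shows "0 \<le> p*u^2 + q*w^2 + 2*t*u*w"
proof (cases "p = 0")
  case True
  then have "t^2 \<le> 0" using assms by simp
  then have "t^2 = 0" by (meson order.antisym zero_le_power2)
  then have "t = 0" by simp
  then show ?thesis using True assms by simp
next
  case False
  then have pp: "p > 0" using assms by simp
  have "p*(p*u^2 + q*w^2 + 2*t*u*w) = (p*u + t*w)^2 + (p*q - t^2)*w^2"
    by (simp add: algebra_simps power2_eq_square)
  also have "\<dots> \<ge> 0" using assms by simp
  finally show ?thesis using pp by (simp add: zero_le_mult_iff)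
qed


lemma mk_state:
  assumes "0 \<le> p" "p \<le> 1" "t^2 \<le> p*(1-p)"
  shows "is_qubit_state (mk p t)"
  unfolding is_qubit_state_def
proof (intro conjI allI)
  fix i j show "mk p t i j = cnj (mk p t j i)" unfolding mk_def by auto
next
  fix v :: "bool \<Rightarrow> complex"
  have A: "0 \<le> p*(Re (v False))^2 + (1-p)*(Re (v True))^2 + 2*t*(Re (v False))*(Re (v True))"
    using quad_nonneg assms by simp
  have B: "0 \<le> p*(Im (v False))^2 + (1-p)*(Im (v True))^2 + 2*t*(Im (v False))*(Im (v True))"
    using quad_nonneg assms by simp
  show "0 \<le> Re (\<Sum>i\<in>UNIV. \<Sum>j\<in>UNIV. cnj (v i) * mk p t i j * v j)"
    using A B by (simp add: UNIV_bool mk_def algebra_simps power2_eq_square)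
next
  show "mk p t False False + mk p t True True = 1" unfolding mk_def by simp
qed


lemma invariant:
  fixes \<delta> x0 :: real
  assumes dp: "0 < \<delta>" and x0p: "0 \<le> x0" and x0s: "x0^2 \<le> \<delta>/2" and dN: "\<delta>*2^N \<le> 1/4"
  shows "k \<le> N \<Longrightarrow> 1 - fst ((stepPX^^k) (1-\<delta>,x0)) \<le> \<delta>*2^k \<and> fst ((stepPX^^k) (1-\<delta>,x0)) \<le> 1
     \<and> snd ((stepPX^^k) (1-\<delta>,x0))^2 \<le> 2^k*\<delta>/2
     \<and> x0^2 * (2*(1-2*\<delta>*2^N))^k \<le> snd ((stepPX^^k) (1-\<delta>,x0))^2"
proof (induction k)
  case 0
  then show ?case using dp x0s by simp
next
  case (Suc k)
  obtain p x where e: "(stepPX^^k) (1-\<delta>,x0) = (p,x)" by (cases "(stepPX^^k) (1-\<delta>,x0)")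
  have IH: "1 - p \<le> \<delta>*2^k" "p \<le> 1" "x^2 \<le> 2^k*\<delta>/2" "x0^2 * (2*(1-2*\<delta>*2^N))^k \<le> x^2"
    using Suc e by auto
  have xp: "0 \<le> x" using x_nonneg[OF x0p, of k "1-\<delta>"] e by simp
  have "(2::real)^(Suc k) \<le> 2^N" using Suc(2) by (intro power_increasing) auto
  then have kN: "2*(2::real)^k \<le> 2^N" by simp
  have "\<delta>*(2*2^k) \<le> \<delta>*2^N" using kN dp by (intro mult_left_mono) auto
  then have hk: "\<delta>*2^k \<le> 1/8" using dN by simp
  have hkN: "\<delta>*2^k \<le> \<delta>*2^N" using kN dp by (smt (verit) mult_left_mono zero_le_power)
  define d where "d = 2*p-1"
  define D where "D = 1+d^2"
  have d1: "3/4 \<le> d" "d \<le> 1" using IH hk unfolding d_def by auto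
  have Dp: "D > 0" unfolding D_def by (simp add: add_pos_nonneg)
  have D2: "D \<le> 2" proof -
    have "d^2 \<le> 1" using d1 by (intro power_le_one) auto
    then show ?thesis unfolding D_def by simp
  qed
  have Dd: "2*d \<le> D" proof -
    have "0 \<le> (d-1)^2" by simp
    then show ?thesis unfolding D_def by (simp add: power2_diff)
  qed
  have x2: "0 \<le> x^2" by simp
  have f1: "2*d*x^2/D \<le> x^2"
  proof -
    have "2*d*x^2 \<le> D*x^2" using Dd x2 by (rule mult_right_mono)
    then show ?thesis using Dp by (simp add: pos_divide_le_eq mult.commute)
  qed
  have f2: "0 \<le> 2*d*x^2/D" using d1 Dp by simp
  have ps: "fst ((stepPX^^(Suc k)) (1-\<delta>,x0)) = p - 2*d*x^2/D"
    using e by (simp add: stepPX_fst d_def D_def)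
  have xs: "snd ((stepPX^^(Suc k)) (1-\<delta>,x0)) = x * sqrt D"
    using e by (simp add: stepPX_snd d_def D_def)
  have xs2: "snd ((stepPX^^(Suc k)) (1-\<delta>,x0))^2 = x^2 * D"
    using xs Dp by (simp add: power_mult_distrib)
  have g1: "1 - fst ((stepPX^^(Suc k)) (1-\<delta>,x0)) \<le> \<delta>*2^(Suc k)"
  proof -
    have "\<delta>*2^(Suc k) = \<delta>*2^k + 2*(2^k*\<delta>/2)" by simp
    moreover have "0 \<le> 2^k*\<delta>/2" using dp by simp
    ultimately show ?thesis using ps IH f1 by linarith
  qed
  have g2: "fst ((stepPX^^(Suc k)) (1-\<delta>,x0)) \<le> 1" using ps IH f2 by simp
  have g3: "snd ((stepPX^^(Suc k)) (1-\<delta>,x0))^2 \<le> 2^(Suc k)*\<delta>/2"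
  proof -
    have "x^2 * D \<le> x^2 * 2" using D2 x2 by (rule mult_left_mono)
    then show ?thesis using xs2 IH by simp
  qed
  have c0: "0 \<le> 2*(1-2*\<delta>*2^N)" using dN by simp
  have cD: "2*(1-2*\<delta>*2^N) \<le> D" using Dd IH hkN unfolding d_def by simp
  have g4: "x0^2 * (2*(1-2*\<delta>*2^N))^(Suc k) \<le> snd ((stepPX^^(Suc k)) (1-\<delta>,x0))^2"
  proof -
    have "(x0^2 * (2*(1-2*\<delta>*2^N))^k) * (2*(1-2*\<delta>*2^N)) \<le> x^2 * D"
      using IH(4) cD x2 c0 by (rule mult_mono)
    then show ?thesis using xs2 by (simp add: algebra_simps)
  qed
  show ?case using g1 g2 g3 g4 by blast
qed


theorem mainTheorem4:
  fixes N :: nat and \<epsilon> :: real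
  assumes "\<epsilon> > 0"
  shows "\<exists>\<rho>. is_qubit_state \<rho> \<and> M1 \<rho> < 1 / real (2 ^ N) \<and>
           (\<forall>m. m \<ge> log 2 (real (2 ^ N)) \<longrightarrow>
              M1 (concat_sigma \<rho> m) / M1 \<rho> > 2 powr (- \<epsilon>) * sqrt (real (2 ^ N)))"
proof -
  define a :: real where "a = 2 powr (-2*\<epsilon>)"
  have a0: "0 < a" unfolding a_def by simp
  have a1: "a < 1"
  proof -
    have "(2::real) powr (-2*\<epsilon>) < 2 powr 0" using assms by (intro powr_less_mono) auto
    then show ?thesis unfolding a_def by simp
  qed
  define \<eta> :: real where "\<eta> = (1-a)/(4*(real N+1))"
  have eta0: "0 < \<eta>" unfolding \<eta>_def using a1 by simp
  have eta1: "\<eta> \<le> 1/4" unfolding \<eta>_def using a0 a1 by (simp add: field_simps)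
  have etaN: "2*real N*\<eta> < 1-a"
  proof -
    have "2*real N*\<eta> = (1-a) * (real N/(2*(real N+1)))" unfolding \<eta>_def by (simp add: field_simps)
    also have "\<dots> < (1-a) * 1" using a1 by (intro mult_strict_left_mono) (auto simp: field_simps)
    finally show ?thesis by simp
  qed
  have four: "(4::real)^N = 2^N*2^N"
  proof -
    have "(4::real)^N = (2*2)^N" by simp
    then show ?thesis by (simp only: power_mult_distrib)
  qed
  define \<delta> :: real where "\<delta> = \<eta>/4^N"
  have d0: "0 < \<delta>" unfolding \<delta>_def using eta0 by simp
  have d2N: "\<delta>*2^N \<le> \<eta>"
  proof -
    have "\<delta>*2^N = \<eta>/2^N" unfolding \<delta>_def four by (simp add: field_simps)
    also have "\<dots> \<le> \<eta>" using eta0 by (simp add: divide_le_eq_1 field_simps)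
    finally show ?thesis .
  qed
  have dle: "\<delta> \<le> \<eta>" using d2N d0 by (smt (verit) mult_le_cancel_left1 one_le_power)
  define t where "t = sqrt (\<delta>/2)"
  have t0: "0 < t" unfolding t_def using d0 by simp
  have t2: "t^2 = \<delta>/2" unfolding t_def using d0 by simp
  define \<rho> where "\<rho> = mk (1-\<delta>) t"
  have st: "is_qubit_state \<rho>" unfolding \<rho>_def
  proof (rule mk_state)
    show "0 \<le> 1-\<delta>" "1-\<delta> \<le> 1" using d0 dle eta1 by auto
    have "(1/2)*\<delta> \<le> (1-\<delta>)*\<delta>" using d0 dle eta1 by (intro mult_right_mono) auto
    then show "t^2 \<le> (1-\<delta>)*(1-(1-\<delta>))" using t2 by simp
  qed
  have M1r: "M1 \<rho> = t" unfolding \<rho>_def M1_mk using t0 by simp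
  have tsmall: "t < 1 / real (2^N)"
  proof -
    have "t^2 < (1/2^N)^2"
    proof -
      have "t^2 = \<eta>/(2*4^N)" using t2 unfolding \<delta>_def by simp
      also have "\<dots> < 1/4^N" using eta1 by (simp add: field_simps)
      also have "\<dots> = (1/2^N)^2" using four by (simp add: power2_eq_square)
      finally show ?thesis .
    qed
    then show ?thesis by (intro power_less_imp_less_base[of t 2]) auto
  qed
  define it where "it = (\<lambda>k. (stepPX^^k) (1-\<delta>, t))"
  define e' where "e' = 2*\<delta>*2^N"
  have inv: "t^2 * (2*(1-e'))^N \<le> snd (it N)^2"
  proof -
    have a1': "0 \<le> t" using t0 by simp
    have a2': "t^2 \<le> \<delta>/2" using t2 by simp
    have a3': "\<delta>*2^N \<le> 1/4" using d2N eta1 by simp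
    show ?thesis using invariant[OF d0 a1' a2' a3' order.refl] unfolding it_def e'_def by blast
  qed
  have xN0: "0 \<le> snd (it N)" unfolding it_def using x_nonneg t0 by simp
  have e'0: "0 \<le> e'" "e' \<le> 1" unfolding e'_def using d0 d2N eta1 by auto
  have Ne': "real N * e' < 1 - a"
  proof -
    have "real N * (\<delta>*2^N) \<le> real N * \<eta>" using d2N by (intro mult_left_mono) auto
    then have "real N * e' \<le> 2*real N*\<eta>" unfolding e'_def by (simp add: algebra_simps)
    then show ?thesis using etaN by simp
  qed
  have bern: "1 - real N * e' \<le> (1-e')^N"
    using Bernoulli_inequality[of "-e'" N] e'0 by simp
  have big: "t^2 * a * 2^N < snd (it N)^2"
  proof -
    have "t^2 * a * 2^N < t^2 * (1 - real N * e') * 2^N"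
      using Ne' t0 by (simp add: mult_strict_right_mono)
    also have "\<dots> \<le> t^2 * (1-e')^N * 2^N"
      using bern by (simp add: mult_right_mono mult_left_mono)
    also have "\<dots> = t^2 * (2*(1-e'))^N" by (simp only: power_mult_distrib mult.commute mult.left_commute)
    also have "\<dots> \<le> snd (it N)^2" by (rule inv)
    finally show ?thesis .
  qed
  define R where "R = t * (2 powr (-\<epsilon>) * sqrt (real (2^N)))"
  have R2: "R^2 = t^2 * a * 2^N"
  proof -
    have "(2 powr (-\<epsilon>))^2 = a" unfolding a_def power2_eq_square
      by (simp add: powr_add[symmetric])
    then show ?thesis unfolding R_def by (simp add: power_mult_distrib)
  qed
  have RxN: "R < snd (it N)"
    using big R2 xN0 by (intro power_less_imp_less_base[of R 2]) auto
  show ?thesis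
  proof (intro exI conjI allI impI)
    show "is_qubit_state \<rho>" by (rule st)
    show "M1 \<rho> < 1 / real (2^N)" using M1r tsmall by simp
  next
    fix m :: nat
    assume "real m \<ge> log 2 (real (2^N))"
    then have mN: "N \<le> m" by simp
    have "snd (it N) \<le> snd (it m)" unfolding it_def using x_mono t0 mN by simp
    then have "R < snd (it m)" using RxN by simp
    moreover have "M1 (concat_sigma \<rho> m) = snd (it m)"
      unfolding \<rho>_def concat_mk M1_mk it_def using x_nonneg t0 by simp
    ultimately show "M1 (concat_sigma \<rho> m) / M1 \<rho> > 2 powr (- \<epsilon>) * sqrt (real (2 ^ N))"
      using M1r t0 unfolding R_def by (simp add: pos_less_divide_eq mult.commute)
  qed
qed

end
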